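(* Let $1\le p<\infty$, let $N\ge1$, let $H$ be a Hilbert space and let $\pi:B(\ell^2_N)\to B(H)$ be a unital $*$-representation. Then for every $n\ge1$ and every $[T_{ij}]\in M_n(B(\ell^2_N))$, $$\|[T_{ij}]\|_{p,M_n(B(\ell^2_N))}\le\|[\pi(T_{ij})]\|_{p,M_n(B(H))}.$$
   Context: For a Banach space $X$ and $[T_{ij}]_{1\le i,j\le n}\in M_n(B(X))$, $\|[T_{ij}]\|_{p,M_n(B(X))}$ is the norm of $[T_{ij}]$ as an operator on $\ell^p_n(X)$, i.e. $\sup\{(\sum_i\|\sum_jT_{ij}x_j\|^p)^{1/p}:x_j\in X,\ \sum_j\|x_j\|^p\le1\}$. *)

theory Defs
  imports "HOL-Analysis.Analysis"
begin

text \<open>A complex Hilbert space structure on a real Banach space 'h: a complex scalar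
multiplication sc extending the real one, and a complex inner product ip
(linear in the second argument) inducing the given norm.  Completeness comes
from the type class banach.\<close>
definition complex_hilbert ::
  "(complex \<Rightarrow> 'h::real_normed_vector \<Rightarrow> 'h) \<Rightarrow> ('h \<Rightarrow> 'h \<Rightarrow> complex) \<Rightarrow> bool" where
  "complex_hilbert sc ip \<longleftrightarrow>
     (\<forall>r x. sc (complex_of_real r) x = r *\<^sub>R x) \<and>
     (\<forall>a b x. sc (a * b) x = sc a (sc b x)) \<and>
     (\<forall>a x y. sc a (x + y) = sc a x + sc a y) \<and>
     (\<forall>a b x. sc (a + b) x = sc a x + sc b x) \<and>
     (\<forall>x y. ip x y = cnj (ip y x)) \<and>
     (\<forall>x y z. ip x (y + z) = ip x y + ip x z) \<and>
     (\<forall>a x y. ip x (sc a y) = a * ip x y) \<and>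
     (\<forall>x. ip x x = complex_of_real ((norm x)\<^sup>2))"

definition bounded_cop :: "(complex \<Rightarrow> 'h::real_normed_vector \<Rightarrow> 'h) \<Rightarrow> ('h \<Rightarrow> 'h) \<Rightarrow> bool" where
  "bounded_cop sc A \<longleftrightarrow>
     (\<forall>x y. A (x + y) = A x + A y) \<and>
     (\<forall>a x. A (sc a x) = sc a (A x)) \<and>
     (\<exists>K. \<forall>x. norm (A x) \<le> K * norm x)"

text \<open>B(l^2_N) is identified with N x N complex matrices acting on complex^'n
(whose norm is the Euclidean l^2 norm); its involution is the conjugate transpose.\<close>
definition conj_transpose :: "complex^'n^'n \<Rightarrow> complex^'n^'n" where
  "conj_transpose A = (\<chi> i j. cnj (A $ j $ i))"

definition unital_star_rep ::
  "(complex \<Rightarrow> 'h::real_normed_vector \<Rightarrow> 'h) \<Rightarrow> ('h \<Rightarrow> 'h \<Rightarrow> complex) \<Rightarrow>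
   (complex^'n::finite^'n \<Rightarrow> 'h \<Rightarrow> 'h) \<Rightarrow> bool" where
  "unital_star_rep sc ip \<pi> \<longleftrightarrow>
     (\<forall>A. bounded_cop sc (\<pi> A)) \<and>
     (\<forall>A B x. \<pi> (A + B) x = \<pi> A x + \<pi> B x) \<and>
     (\<forall>c A x. \<pi> (\<chi> i j. c * A $ i $ j) x = sc c (\<pi> A x)) \<and>
     (\<forall>A B x. \<pi> (A ** B) x = \<pi> A (\<pi> B x)) \<and>
     (\<forall>x. \<pi> (mat 1) x = x) \<and>
     (\<forall>A x y. ip (\<pi> A x) y = ip x (\<pi> (conj_transpose A) y))"

definition mat_pnorm :: "real \<Rightarrow> nat \<Rightarrow> (nat \<Rightarrow> nat \<Rightarrow> 'x::real_normed_vector \<Rightarrow> 'x) \<Rightarrow> real" where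
  "mat_pnorm p n T =
     (SUP x \<in> {x :: nat \<Rightarrow> 'x. (\<Sum>j<n. norm (x j) powr p) \<le> 1}.
        (\<Sum>i<n. norm (\<Sum>j<n. T i j (x j)) powr p) powr (1 / p))"

end

theory Submission
  imports Defs
begin
definition Eu :: "'n::finite \<Rightarrow> 'n \<Rightarrow> complex^'n^'n" where
  "Eu k l = (\<chi> i j. if i = k \<and> j = l then 1 else 0)"
definition colm :: "'n::finite \<Rightarrow> complex^'n \<Rightarrow> complex^'n^'n" where
  "colm a v = (\<chi> i j. if j = a then v$i else 0)"

lemma Eu_mult: "Eu k l ** Eu l' m = (if l = l' then Eu k m else 0)"
  by (auto simp: vec_eq_iff Eu_def matrix_matrix_mult_def if_distrib[of "\<lambda>x. x * _"] sum.delta cong: if_cong)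

lemma mat1_sum: "mat 1 = (\<Sum>k\<in>UNIV. Eu k k)"
  by (auto simp: vec_eq_iff Eu_def mat_def sum_component intro!: sum.neutral)

lemma colm_mult: "A ** colm a v = colm a (A *v v)"
  by (auto simp: vec_eq_iff colm_def matrix_matrix_mult_def matrix_vector_mult_def if_distrib[of "\<lambda>x. _ * x"] cong: if_cong)

lemma colm_add: "colm a (v + w) = colm a v + colm a w"
  by (auto simp: vec_eq_iff colm_def)

lemma colm_ct: "conj_transpose (colm a v) ** colm a v = (\<chi> i j. complex_of_real ((norm v)\<^sup>2) * Eu a a $ i $ j)"
proof -
  have "(norm v)\<^sup>2 = (\<Sum>k\<in>UNIV. (cmod (v$k))\<^sup>2)"
    by (simp add: norm_vec_def L2_set_def sum_nonneg)
  then have "complex_of_real ((norm v)\<^sup>2) = (\<Sum>k\<in>UNIV. cnj (v$k) * v$k)"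
    by (simp add: complex_norm_square mult.commute del: of_real_power)
  then show ?thesis
    by (auto simp: vec_eq_iff colm_def conj_transpose_def Eu_def matrix_matrix_mult_def)
qed

lemma pi_zero_mat:
  assumes "unital_star_rep sc ip \<pi>" shows "\<pi> 0 x = 0"
proof -
  have "\<pi> (0 + 0) x = \<pi> 0 x + \<pi> 0 x" using assms unfolding unital_star_rep_def by blast
  then show ?thesis by simp
qed

lemma pi_sum:
  assumes "unital_star_rep sc ip \<pi>" "finite S" shows "\<pi> (sum f S) x = (\<Sum>k\<in>S. \<pi> (f k) x)"
  using assms(2)
proof (induction S rule: finite_induct)
  case empty then show ?case using pi_zero_mat[OF assms(1)] by simp
next
  case (insert k S)
  then show ?case using assms(1) unfolding unital_star_rep_def by simp
qed

lemma pi_add: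
  assumes "unital_star_rep sc ip \<pi>" shows "\<pi> A (x + y) = \<pi> A x + \<pi> A y"
  using assms unfolding unital_star_rep_def bounded_cop_def by blast

lemma pi_zero_vec:
  assumes "unital_star_rep sc ip \<pi>" shows "\<pi> A 0 = 0"
proof -
  have "\<pi> A (0 + 0) = \<pi> A 0 + \<pi> A 0" by (rule pi_add[OF assms])
  then show ?thesis by simp
qed

lemma pi_real:
  assumes "unital_star_rep sc ip \<pi>" "complex_hilbert sc ip"
  shows "\<pi> A (r *\<^sub>R x) = r *\<^sub>R \<pi> A x"
proof -
  have "\<pi> A (sc (complex_of_real r) x) = sc (complex_of_real r) (\<pi> A x)"
    using assms(1) unfolding unital_star_rep_def bounded_cop_def by blast
  moreover have "\<forall>r x. sc (complex_of_real r) x = r *\<^sub>R x" using assms(2) unfolding complex_hilbert_def by blast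
  ultimately show ?thesis by simp
qed

lemma exists_iso:
  fixes sc :: "complex \<Rightarrow> 'h::banach \<Rightarrow> 'h"
    and \<pi> :: "complex^'n::finite^'n \<Rightarrow> 'h \<Rightarrow> 'h"
  assumes H: "complex_hilbert sc ip" and ne: "\<exists>x::'h. x \<noteq> 0" and R: "unital_star_rep sc ip \<pi>"
  shows "\<exists>V. (\<forall>v w. V (v + w) = V v + V w) \<and> (\<forall>v. norm (V v) = norm v) \<and> (\<forall>A v. \<pi> A (V v) = V (A *v v))"
proof -
  obtain h :: 'h where h: "h \<noteq> 0" using ne by blast
  define a :: 'n where "a = undefined"
  define P where "P = Eu a a"
  have mult: "\<pi> (A ** B) x = \<pi> A (\<pi> B x)" for A B x using R unfolding unital_star_rep_def by blast
  have "\<exists>z. \<pi> P z \<noteq> 0"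
  proof (rule ccontr)
    assume "\<not> ?thesis"
    then have z: "\<pi> P z = 0" for z by blast
    have "h = \<pi> (mat 1) h" using R unfolding unital_star_rep_def by simp
    also have "\<dots> = (\<Sum>k\<in>UNIV. \<pi> (Eu k k) h)" by (simp add: mat1_sum pi_sum[OF R])
    also have "\<dots> = (\<Sum>k\<in>UNIV. \<pi> (Eu k a ** (P ** Eu a k)) h)" by (simp add: P_def Eu_mult)
    also have "\<dots> = 0" by (simp add: mult z pi_zero_vec[OF R])
    finally show False using h by simp
  qed
  then obtain z where z: "\<pi> P z \<noteq> 0" by blast
  define e0 where "e0 = \<pi> P z"
  have Pe0: "\<pi> P e0 = e0" unfolding e0_def mult[symmetric] by (simp add: P_def Eu_mult)
  define e where "e = (1 / norm e0) *\<^sub>R e0"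
  have Pe: "\<pi> P e = e" unfolding e_def by (simp add: pi_real[OF R H] Pe0)
  have ne: "norm e = 1" unfolding e_def using z e0_def by simp
  define V where "V v = \<pi> (colm a v) e" for v
  have add: "V (v + w) = V v + V w" for v w
    unfolding V_def colm_add using R unfolding unital_star_rep_def by blast
  have inter: "\<pi> A (V v) = V (A *v v)" for A v
    unfolding V_def mult[symmetric] colm_mult ..
  have nrm: "norm (V v) = norm v" for v
  proof -
    define c where "c = complex_of_real ((norm v)\<^sup>2)"
    have sc_lin: "ip x (sc c y) = c * ip x y" for x y using H unfolding complex_hilbert_def by blast
    have ipn: "\<forall>x. ip x x = complex_of_real ((norm x)\<^sup>2)" using H unfolding complex_hilbert_def by blast
    have "complex_of_real ((norm (V v))\<^sup>2) = ip (V v) (V v)" using ipn by simp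
    also have "\<dots> = ip e (\<pi> (conj_transpose (colm a v)) (V v))"
      unfolding V_def using R unfolding unital_star_rep_def by blast
    also have "\<dots> = ip e (\<pi> (\<chi> i j. c * P $ i $ j) e)"
      unfolding V_def mult[symmetric] colm_ct c_def P_def ..
    also have "\<dots> = ip e (sc c (\<pi> P e))" using R unfolding unital_star_rep_def by simp
    also have "\<dots> = c" using ipn Pe ne sc_lin by simp
    finally have "(norm (V v))\<^sup>2 = (norm v)\<^sup>2" unfolding c_def using of_real_eq_iff by blast
    then show ?thesis by (simp add: power2_eq_iff_nonneg)
  qed
  show ?thesis using add nrm inter by blast
qed

theorem lemma5p1:
  fixes p :: real
    and sc :: "complex \<Rightarrow> 'h::banach \<Rightarrow> 'h"
    and ip :: "'h \<Rightarrow> 'h \<Rightarrow> complex"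
    and \<pi> :: "complex^'n::finite^'n \<Rightarrow> 'h \<Rightarrow> 'h"
    and n :: nat
    and T :: "nat \<Rightarrow> nat \<Rightarrow> complex^'n^'n"
  assumes "1 \<le> p"
    and "complex_hilbert sc ip"
    and "\<exists>x::'h. x \<noteq> 0"
    and "unital_star_rep sc ip \<pi>"
    and "1 \<le> n"
  shows "mat_pnorm p n (\<lambda>i j x. T i j *v x) \<le> mat_pnorm p n (\<lambda>i j. \<pi> (T i j))"
proof -
  note R = assms(4)
  obtain V where add: "\<And>v w. V (v + w) = V v + V w" and nrm: "\<And>v. norm (V v) = norm v"
    and inter: "\<And>A v. \<pi> A (V v) = V (A *v v)"
    using exists_iso[OF assms(2,3,4)] by blast
  have V0: "V 0 = 0" using add[of 0 0] by simp
  have Vsum: "V (sum f S) = (\<Sum>k\<in>S. V (f k))" if "finite S" for f :: "nat \<Rightarrow> _" and S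
    using that by (induction S rule: finite_induct) (auto simp: V0 add)
  define XL where "XL = {x :: nat \<Rightarrow> complex^'n. (\<Sum>j<n. norm (x j) powr p) \<le> 1}"
  define XR where "XR = {x :: nat \<Rightarrow> 'h. (\<Sum>j<n. norm (x j) powr p) \<le> 1}"
  define gL where "gL x = (\<Sum>i<n. norm (\<Sum>j<n. T i j *v (x j)) powr p) powr (1 / p)" for x
  define gR where "gR x = (\<Sum>i<n. norm (\<Sum>j<n. \<pi> (T i j) (x j)) powr p) powr (1 / p)" for x
  have p0: "0 < p" using assms(1) by simp
  have bdd: "bdd_above (gR ` XR)"
  proof -
    have "\<forall>A. \<exists>K. \<forall>x. norm (\<pi> A x) \<le> K * norm x"
      using R unfolding unital_star_rep_def bounded_cop_def by blast
    then obtain Kf where Kf: "\<And>A x. norm (\<pi> A x) \<le> Kf A * norm x" by metis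
    define C where "C = (\<Sum>i<n. \<Sum>j<n. \<bar>Kf (T i j)\<bar>)"
    have C0: "0 \<le> C" unfolding C_def by (simp add: sum_nonneg)
    have "gR x \<le> (real n * C powr p) powr (1 / p)" if x: "x \<in> XR" for x
    proof -
      have x1: "norm (x j) \<le> 1" if "j < n" for j
      proof (rule ccontr)
        assume "\<not> ?thesis"
        then have "1 < norm (x j) powr p" using p0
          using powr_less_mono2[of p 1 "norm (x j)"] by simp
        moreover have "norm (x j) powr p \<le> (\<Sum>j<n. norm (x j) powr p)"
          using that by (intro member_le_sum) auto
        ultimately show False using x unfolding XR_def by simp
      qed
      have bi: "norm (\<Sum>j<n. \<pi> (T i j) (x j)) \<le> C" if i: "i < n" for i
      proof -
        have "norm (\<Sum>j<n. \<pi> (T i j) (x j)) \<le> (\<Sum>j<n. norm (\<pi> (T i j) (x j)))"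
          by (rule norm_sum)
        also have "\<dots> \<le> (\<Sum>j<n. \<bar>Kf (T i j)\<bar>)"
        proof (rule sum_mono)
          fix j assume j: "j \<in> {..<n}"
          have "norm (\<pi> (T i j) (x j)) \<le> Kf (T i j) * norm (x j)" by (rule Kf)
          also have "\<dots> \<le> \<bar>Kf (T i j)\<bar> * norm (x j)" by (simp add: mult_right_mono)
          also have "\<dots> \<le> \<bar>Kf (T i j)\<bar>" using x1[of j] j by (simp add: mult_left_le)
          finally show "norm (\<pi> (T i j) (x j)) \<le> \<bar>Kf (T i j)\<bar>" .
        qed
        also have "\<dots> \<le> C" unfolding C_def using i
          by (intro member_le_sum[where f = "\<lambda>i. \<Sum>j<n. \<bar>Kf (T i j)\<bar>"]) (auto simp: sum_nonneg)
        finally show ?thesis .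
      qed
      have "(\<Sum>i<n. norm (\<Sum>j<n. \<pi> (T i j) (x j)) powr p) \<le> (\<Sum>i<n. C powr p)"
        by (intro sum_mono powr_mono2) (use p0 bi in auto)
      then have "(\<Sum>i<n. norm (\<Sum>j<n. \<pi> (T i j) (x j)) powr p) \<le> real n * C powr p" by simp
      then show ?thesis unfolding gR_def
        by (intro powr_mono2) (use p0 in \<open>auto simp: sum_nonneg\<close>)
    qed
    then show ?thesis by (auto simp: bdd_above_def)
  qed
  have neL: "XL \<noteq> {}"
  proof -
    have "(\<lambda>_. 0) \<in> XL" unfolding XL_def by simp
    then show ?thesis by blast
  qed
  have "gL x \<le> (SUP y\<in>XR. gR y)" if x: "x \<in> XL" for x
  proof -
    have "V \<circ> x \<in> XR" using x unfolding XR_def XL_def by (simp add: nrm)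
    moreover have "gR (V \<circ> x) = gL x"
      unfolding gR_def gL_def by (simp add: inter Vsum[symmetric] nrm)
    ultimately show ?thesis by (metis bdd cSUP_upper)
  qed
  then have "(SUP x\<in>XL. gL x) \<le> (SUP y\<in>XR. gR y)" by (intro cSUP_least neL)
  then show ?thesis unfolding mat_pnorm_def XL_def XR_def gL_def gR_def .
qed
end
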